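(* Let $u$ be a smooth function on $\overline\Omega$ such that $-\partial_{xx}u+L(u)+c(x)u\ge0$ in $\Omega$, where $c$ is a non-negative bounded smooth function. If there exists $x_0\in\partial\Omega$ such that $\min_{x\in\Omega}u(x)=u(x_0)<0$, then either $u$ is constant or $\partial_{\nu_x}u(x_0)<0$, where $\nu_x$ is the exterior normal.
   Context: $\Omega=\bigcup_{i=1}^m ]a_i,b_i[\subset\mathbb{R}$ with $a_1<b_1<\dots<a_m<b_m$; $K$ is a $C^1$ even function with $K>0$, $0<c_K<K<C_K$, $|K'|<C_K$; $L\phi(x)=\int_\Omega[\phi(x)-\phi(y)]K(x-y)dy$. *)

theory Defs
  imports "HOL-Analysis.Analysis"
begin

definition smooth_within :: "(real \<Rightarrow> real) \<Rightarrow> real set \<Rightarrow> bool" where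
  "smooth_within f S \<longleftrightarrow>
     (\<exists>D :: nat \<Rightarrow> real \<Rightarrow> real. (\<forall>x\<in>S. D 0 x = f x) \<and>
        (\<forall>n. \<forall>x\<in>S. (D n has_real_derivative D (Suc n) x) (at x within S)))"

definition Omega :: "nat \<Rightarrow> (nat \<Rightarrow> real) \<Rightarrow> (nat \<Rightarrow> real) \<Rightarrow> real set" where
  "Omega m a b = (\<Union>i<m. {a i<..<b i})"

definition nonlocal_L :: "(real \<Rightarrow> real) \<Rightarrow> real set \<Rightarrow> (real \<Rightarrow> real) \<Rightarrow> real \<Rightarrow> real" where
  "nonlocal_L K \<Omega> \<phi> x = integral \<Omega> (\<lambda>y. (\<phi> x - \<phi> y) * K (x - y))"

end

theory Submission
  imports Defs
begin


lemma int_zero_pos: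
  fixes g :: "real \<Rightarrow> real"
  assumes S: "open S" and cg: "continuous_on S g" and nn: "\<And>y. y \<in> S \<Longrightarrow> 0 \<le> g y"
    and ig: "g integrable_on S" and le: "integral S g \<le> 0" and y: "y \<in> S"
  shows "g y = 0"
proof -
  obtain e where e: "e > 0" "ball y e \<subseteq> S" using S y openE by blast
  define I where "I = {y - e/2 .. y + e/2}"
  have IS: "I \<subseteq> S"
  proof
    fix z assume "z \<in> I"
    then have "dist z y < e" using e by (auto simp: I_def dist_real_def abs_if)
    then show "z \<in> S" using e by (auto simp: dist_commute)
  qed
  have cI: "continuous_on I g" using continuous_on_subset[OF cg IS] .
  have iI: "g integrable_on I" unfolding I_def by (rule integrable_continuous_interval) (use cI I_def in simp)
  have "integral I g \<le> integral S g" using integral_subset_le[OF IS iI ig] nn by blast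
  moreover have "0 \<le> integral I g" using integral_nonneg[OF iI] nn IS by blast
  ultimately have "integral I g = 0" using le by simp
  then have hi: "(g has_integral 0) (cbox (y - e/2) (y + e/2))"
    using iI unfolding I_def by (metis cbox_interval has_integral_integral)
  show ?thesis
    by (rule has_integral_0_cbox_imp_0[OF _ _ hi]) (use cI IS nn e in \<open>auto simp: I_def intro!: nn\<close>)
qed

lemma int_bounded_cont:
  fixes f :: "real \<Rightarrow> real"
  assumes S: "open S" "bounded S" and cf: "continuous_on S f" and B: "\<And>y. y \<in> S \<Longrightarrow> \<bar>f y\<bar> \<le> C"
  shows "f integrable_on S"
proof -
  have L: "S \<in> lmeasurable" using lmeasurable_open S by blast
  then have Ls: "S \<in> sets lebesgue" by (simp add: fmeasurableD)
  show ?thesis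
    by (rule measurable_bounded_by_integrable_imp_integrable_real[of f S "\<lambda>_. C"])
       (use continuous_imp_measurable_on_sets_lebesgue[OF cf Ls] integrable_on_const[OF L] B Ls in auto)
qed

lemma gron_left:
  fixes w w1 w2 :: "real \<Rightarrow> real" and p q A :: real
  assumes pq: "p < q" and cw: "continuous_on {p..q} w" and cw1: "continuous_on {p..q} w1"
    and d1: "\<And>x. p < x \<Longrightarrow> x < q \<Longrightarrow> (w has_real_derivative w1 x) (at x)"
    and d2: "\<And>x. p < x \<Longrightarrow> x < q \<Longrightarrow> (w1 has_real_derivative w2 x) (at x)"
    and w0: "w p = 0" and w10: "w1 p = 0"
    and wnn: "\<And>x. p \<le> x \<Longrightarrow> x \<le> q \<Longrightarrow> 0 \<le> w x"
    and w2le: "\<And>x. p < x \<Longrightarrow> x < q \<Longrightarrow> w2 x \<le> A * w x"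
    and A: "0 \<le> A"
  shows "\<exists>\<delta>>0. \<delta> \<le> q - p \<and> (\<forall>x. p \<le> x \<and> x \<le> p + \<delta> \<longrightarrow> w x = 0)"
proof -
  define \<delta> where "\<delta> = min ((q - p)/2) (min 1 (1 / (A + 1)))"
  have dpos: "\<delta> > 0" using pq A by (simp add: \<delta>_def)
  have dle1: "2 * \<delta> \<le> q - p" unfolding \<delta>_def by (auto simp: min_def)
  have dle2: "\<delta> \<le> 1" "\<delta> \<le> 1/(A+1)" unfolding \<delta>_def by (simp_all add: min.coboundedI2)
  note dle = dle1 dle2
  have Ad: "A * \<delta> * \<delta> < 1"
  proof -
    have "A * \<delta> * \<delta> \<le> A * \<delta>" using dle2(1) A dpos by (simp add: mult_left_le)
    also have "A * \<delta> \<le> A * (1/(A+1))" using dle(3) A by (rule mult_left_mono)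
    also have "\<dots> < 1" using A by (simp add: field_simps)
    finally show ?thesis .
  qed
  have "w t = 0" if t: "p \<le> t" "t \<le> p + \<delta>" for t
  proof -
    have tq: "t \<le> q" using t dle1 pq by linarith
    have ne: "{p..t} \<noteq> {}" using t by simp
    have cs: "continuous_on {p..t} w" by (rule continuous_on_subset[OF cw]) (use tq in auto)
    obtain s where s: "s \<in> {p..t}" and smax: "\<And>y. y \<in> {p..t} \<Longrightarrow> w y \<le> w s"
      using continuous_attains_sup[OF compact_Icc ne cs] by blast
    have ws0: "w s = 0"
    proof (cases "s = p")
      case True then show ?thesis using w0 by simp
    next
      case False
      then have sp: "p < s" using s by simp
      have sq: "s < q" using s pq t dle1 by simp
      obtain l \<xi> where xi: "p < \<xi>" "\<xi> < s" and dl: "DERIV w \<xi> :> l" and eq1: "w s - w p = (s - p) * l"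
      proof -
        have c: "continuous_on {p..s} w" by (rule continuous_on_subset[OF cw]) (use sq in auto)
        have "w differentiable (at x)" if "p < x" "x < s" for x
          using d1[of x] that sq unfolding real_differentiable_def by auto
        then show ?thesis using MVT[OF sp c] that by blast
      qed
      have l: "l = w1 \<xi>" using DERIV_unique[OF dl d1[of \<xi>]] xi sq by simp
      obtain l2 \<eta> where eta: "p < \<eta>" "\<eta> < \<xi>" and dl2: "DERIV w1 \<eta> :> l2" and eq2: "w1 \<xi> - w1 p = (\<xi> - p) * l2"
      proof -
        have c: "continuous_on {p..\<xi>} w1" by (rule continuous_on_subset[OF cw1]) (use sq xi in auto)
        have "w1 differentiable (at x)" if "p < x" "x < \<xi>" for x
          using d2[of x] that sq xi unfolding real_differentiable_def by auto
        then show ?thesis using MVT[OF xi(1) c] that by blast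
      qed
      have l2: "l2 = w2 \<eta>" using DERIV_unique[OF dl2 d2[of \<eta>]] eta xi sq by simp
      have ws: "w s = (s - p) * ((\<xi> - p) * w2 \<eta>)" using eq1 eq2 l l2 w0 w10 by simp
      have weta: "w \<eta> \<le> w s" using smax eta xi s by simp
      have "w2 \<eta> \<le> A * w s"
        using w2le[of \<eta>] eta xi sq A weta by (smt (verit) mult_left_mono)
      have wsnn: "0 \<le> w s" using wnn s tq by simp
      have "(\<xi> - p) * w2 \<eta> \<le> (\<xi> - p) * (A * w s)"
        using \<open>w2 \<eta> \<le> A * w s\<close> xi by (simp add: mult_left_mono)
      also have "\<dots> \<le> \<delta> * (A * w s)"
        using xi s t wsnn A by (intro mult_right_mono) auto
      finally have h1: "(\<xi> - p) * w2 \<eta> \<le> \<delta> * (A * w s)" .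
      have "w s \<le> (s - p) * (\<delta> * (A * w s))"
        using ws h1 sp by (simp add: mult_left_mono)
      also have "\<dots> \<le> \<delta> * (\<delta> * (A * w s))"
        using s t wsnn A dpos by (intro mult_right_mono) auto
      finally have "w s \<le> (A * \<delta> * \<delta>) * w s" by (simp add: algebra_simps)
      then show ?thesis using Ad wsnn
        by (smt (verit) mult_le_cancel_right1)
    qed
    show ?thesis using smax[of t] ws0 wnn[of t] t tq by simp
  qed
  then show ?thesis using dpos dle1 pq by (intro exI[of _ \<delta>] conjI) auto
qed

lemma gron_right:
  fixes w w1 w2 :: "real \<Rightarrow> real" and p q A :: real
  assumes pq: "p < q" and cw: "continuous_on {p..q} w" and cw1: "continuous_on {p..q} w1"
    and d1: "\<And>x. p < x \<Longrightarrow> x < q \<Longrightarrow> (w has_real_derivative w1 x) (at x)"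
    and d2: "\<And>x. p < x \<Longrightarrow> x < q \<Longrightarrow> (w1 has_real_derivative w2 x) (at x)"
    and w0: "w q = 0" and w10: "w1 q = 0"
    and wnn: "\<And>x. p \<le> x \<Longrightarrow> x \<le> q \<Longrightarrow> 0 \<le> w x"
    and w2le: "\<And>x. p < x \<Longrightarrow> x < q \<Longrightarrow> w2 x \<le> A * w x"
    and A: "0 \<le> A"
  shows "\<exists>\<delta>>0. \<delta> \<le> q - p \<and> (\<forall>x. q - \<delta> \<le> x \<and> x \<le> q \<longrightarrow> w x = 0)"
proof -
  define \<delta> where "\<delta> = min ((q - p)/2) (min 1 (1 / (A + 1)))"
  have dpos: "\<delta> > 0" using pq A by (simp add: \<delta>_def)
  have dle1: "2 * \<delta> \<le> q - p" unfolding \<delta>_def by (auto simp: min_def)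
  have dle2: "\<delta> \<le> 1" "\<delta> \<le> 1/(A+1)" unfolding \<delta>_def by (simp_all add: min.coboundedI2)
  note dle = dle1 dle2
  have Ad: "A * \<delta> * \<delta> < 1"
  proof -
    have "A * \<delta> * \<delta> \<le> A * \<delta>" using dle2(1) A dpos by (simp add: mult_left_le)
    also have "A * \<delta> \<le> A * (1/(A+1))" using dle(3) A by (rule mult_left_mono)
    also have "\<dots> < 1" using A by (simp add: field_simps)
    finally show ?thesis .
  qed
  have "w t = 0" if t: "q - \<delta> \<le> t" "t \<le> q" for t
  proof -
    have tq: "p \<le> t" using t dle1 pq by linarith
    have ne: "{t..q} \<noteq> {}" using t by simp
    have cs: "continuous_on {t..q} w" by (rule continuous_on_subset[OF cw]) (use tq in auto)
    obtain s where s: "s \<in> {t..q}" and smax: "\<And>y. y \<in> {t..q} \<Longrightarrow> w y \<le> w s"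
      using continuous_attains_sup[OF compact_Icc ne cs] by blast
    have ws0: "w s = 0"
    proof (cases "s = q")
      case True then show ?thesis using w0 by simp
    next
      case False
      then have sp: "s < q" using s by simp
      have sq: "p < s" using s pq t dle1 by simp
      obtain l \<xi> where xi: "s < \<xi>" "\<xi> < q" and dl: "DERIV w \<xi> :> l" and eq1: "w q - w s = (q - s) * l"
      proof -
        have c: "continuous_on {s..q} w" by (rule continuous_on_subset[OF cw]) (use sq in auto)
        have "w differentiable (at x)" if "s < x" "x < q" for x
          using d1[of x] that sq unfolding real_differentiable_def by auto
        then show ?thesis using MVT[OF sp c] that by blast
      qed
      have l: "l = w1 \<xi>" using DERIV_unique[OF dl d1[of \<xi>]] xi sq by simp
      obtain l2 \<eta> where eta: "\<xi> < \<eta>" "\<eta> < q" and dl2: "DERIV w1 \<eta> :> l2" and eq2: "w1 q - w1 \<xi> = (q - \<xi>) * l2"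
      proof -
        have c: "continuous_on {\<xi>..q} w1" by (rule continuous_on_subset[OF cw1]) (use sq xi in auto)
        have "w1 differentiable (at x)" if "\<xi> < x" "x < q" for x
          using d2[of x] that sq xi unfolding real_differentiable_def by auto
        then show ?thesis using MVT[OF xi(2) c] that by blast
      qed
      have l2: "l2 = w2 \<eta>" using DERIV_unique[OF dl2 d2[of \<eta>]] eta xi sq by simp
      have e1: "w s = - ((q - s) * w1 \<xi>)" using eq1 l w0 by simp
      have e2: "w1 \<xi> = - ((q - \<xi>) * w2 \<eta>)" using eq2 l2 w10 by simp
      have ws: "w s = (q - s) * ((q - \<xi>) * w2 \<eta>)" unfolding e1 e2 by simp
      have weta: "w \<eta> \<le> w s" using smax eta xi s by simp
      have "w2 \<eta> \<le> A * w s"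
        using w2le[of \<eta>] eta xi sq A weta by (smt (verit) mult_left_mono)
      have wsnn: "0 \<le> w s" using wnn s tq by simp
      have "(q - \<xi>) * w2 \<eta> \<le> (q - \<xi>) * (A * w s)"
        using \<open>w2 \<eta> \<le> A * w s\<close> xi by (simp add: mult_left_mono)
      also have "\<dots> \<le> \<delta> * (A * w s)"
        using xi s t wsnn A by (intro mult_right_mono) auto
      finally have h1: "(q - \<xi>) * w2 \<eta> \<le> \<delta> * (A * w s)" .
      have "w s \<le> (q - s) * (\<delta> * (A * w s))"
        using ws h1 sp by (simp add: mult_left_mono)
      also have "\<dots> \<le> \<delta> * (\<delta> * (A * w s))"
        using s t wsnn A dpos by (intro mult_right_mono) auto
      finally have "w s \<le> (A * \<delta> * \<delta>) * w s" by (simp add: algebra_simps)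
      then show ?thesis using Ad wsnn
        by (smt (verit) mult_le_cancel_right1)
    qed
    show ?thesis using smax[of t] ws0 wnn[of t] t tq by simp
  qed
  then show ?thesis using dpos dle1 pq by (intro exI[of _ \<delta>] conjI) auto
qed


theorem lemma4:
  fixes m :: nat and a b :: "nat \<Rightarrow> real"
    and K K' :: "real \<Rightarrow> real" and cK CK :: real
    and u c :: "real \<Rightarrow> real" and x0 :: real and i :: nat
  assumes m_pos: "m \<ge> 1"
    and ab: "\<And>j. j < m \<Longrightarrow> a j < b j"
    and ba: "\<And>j. Suc j < m \<Longrightarrow> b j < a (Suc j)"
    and K_deriv: "\<And>x. (K has_real_derivative K' x) (at x)"
    and K'_cont: "continuous_on UNIV K'"
    and K_even: "\<And>x. K (- x) = K x"
    and K_pos: "\<And>x. K x > 0"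
    and cK_pos: "0 < cK"
    and K_bounds: "\<And>x. cK < K x \<and> K x < CK"
    and K'_bound: "\<And>x. \<bar>K' x\<bar> < CK"
    and u_smooth: "\<And>j. j < m \<Longrightarrow> smooth_within u {a j..b j}"
    and c_smooth: "smooth_within c (Omega m a b)"
    and c_nonneg: "\<And>x. x \<in> Omega m a b \<Longrightarrow> c x \<ge> 0"
    and c_bounded: "bounded (c ` Omega m a b)"
    and ineq: "\<And>x. x \<in> Omega m a b \<Longrightarrow>
       - deriv (deriv u) x + nonlocal_L K (Omega m a b) u x + c x * u x \<ge> 0"
    and i_lt: "i < m"
    and x0_bdry: "x0 = a i \<or> x0 = b i"
    and x0_min: "\<And>x. x \<in> Omega m a b \<Longrightarrow> u x0 \<le> u x"
    and u_neg: "u x0 < 0"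
  shows "(\<exists>k. \<forall>x\<in>Omega m a b. u x = k) \<or>
         (x0 = a i \<longrightarrow> (\<exists>d. (u has_real_derivative d) (at x0 within {a i..b i}) \<and> - d < 0)) \<and>
         (x0 = b i \<longrightarrow> (\<exists>d. (u has_real_derivative d) (at x0 within {a i..b i}) \<and> d < 0))"
proof -
  define W where "W = Omega m a b"
  define m0 where "m0 = u x0"
  have sub: "{a i<..<b i} \<subseteq> W" using i_lt unfolding W_def Omega_def by auto
  have oW: "open W" unfolding W_def Omega_def by auto
  have bW: "bounded W" unfolding W_def Omega_def by (intro bounded_UN) auto
  have LW: "W \<in> lmeasurable" using lmeasurable_open oW bW by blast
  define U where "U = (\<Union>j<m. {a j..b j})"
  have WU: "W \<subseteq> U" unfolding W_def Omega_def U_def by auto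
  have cuU: "continuous_on U u" unfolding U_def
  proof (rule continuous_on_closed_Union)
    fix j assume "j \<in> {..<m}"
    then obtain D where D0: "\<forall>x\<in>{a j..b j}. D 0 x = u x"
      and DS: "\<forall>n. \<forall>x\<in>{a j..b j}. (D n has_real_derivative D (Suc n) x) (at x within {a j..b j})"
      using u_smooth[of j] \<open>j \<in> {..<m}\<close> unfolding smooth_within_def by auto
    have "continuous_on {a j..b j} (D 0)" by (rule DERIV_continuous_on) (use DS in blast)
    then show "continuous_on {a j..b j} u" using continuous_on_cong D0 by blast
  qed auto
  have "compact (u ` U)" unfolding U_def
    by (rule compact_continuous_image) (use cuU U_def in auto)
  then obtain B where B: "\<And>y. y \<in> U \<Longrightarrow> \<bar>u y\<bar> \<le> B"
    using compact_imp_bounded[of "u ` U"] unfolding bounded_iff by auto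
  have cuW: "continuous_on W u" using continuous_on_subset[OF cuU WU] .
  have cK: "continuous_on UNIV K"
    by (rule DERIV_continuous_on[of _ _ K']) (use K_deriv in auto)
  have CKpos: "0 < CK" using K_bounds[of 0] cK_pos by linarith
  have cKx: "continuous_on W (\<lambda>y. K (x - y))" for x
    by (rule continuous_on_compose2[OF cK]) (auto intro!: continuous_intros)
  have m0le: "\<And>y. y \<in> W \<Longrightarrow> m0 \<le> u y" using x0_min unfolding m0_def W_def by auto
  have m0neg: "m0 < 0" using u_neg m0_def by simp
  define A where "A = CK * integral W (\<lambda>y. 1)"
  have "0 \<le> integral W (\<lambda>y. 1::real)" by (rule integral_nonneg[OF integrable_on_const[OF LW]]) simp
  then have A0: "0 \<le> A" unfolding A_def using CKpos by simp
  have Lbound: "nonlocal_L K W u x \<le> A * (u x - m0)" if ux: "m0 \<le> u x" for x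
  proof -
    have i1: "(\<lambda>y. (u x - u y) * K (x - y)) integrable_on W"
    proof (rule int_bounded_cont[OF oW bW, where C = "(\<bar>u x\<bar> + B) * CK"])
      show "continuous_on W (\<lambda>y. (u x - u y) * K (x - y))"
        by (intro continuous_intros cuW cKx)
      fix y assume y: "y \<in> W"
      have "\<bar>u x - u y\<bar> \<le> \<bar>u x\<bar> + B" using B[of y] y WU by auto
      moreover have "\<bar>K (x - y)\<bar> \<le> CK" using K_bounds[of "x - y"] K_pos[of "x-y"] by simp
      ultimately show "\<bar>(u x - u y) * K (x - y)\<bar> \<le> (\<bar>u x\<bar> + B) * CK"
        unfolding abs_mult by (intro mult_mono) auto
    qed
    have "nonlocal_L K W u x = integral W (\<lambda>y. (u x - u y) * K (x - y))"
      by (simp add: nonlocal_L_def)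
    also have "\<dots> \<le> integral W (\<lambda>y. ((u x - m0) * CK) * 1)"
    proof (rule integral_le[OF i1 integrable_on_const[OF LW]])
      fix y assume y: "y \<in> W"
      have "(u x - u y) * K (x - y) \<le> (u x - m0) * K (x - y)"
        using m0le[OF y] K_pos[of "x - y"] by (intro mult_right_mono) auto
      also have "\<dots> \<le> (u x - m0) * CK"
        using ux K_bounds[of "x - y"] by (intro mult_left_mono) auto
      finally show "(u x - u y) * K (x - y) \<le> (u x - m0) * CK * 1" by simp
    qed
    also have "\<dots> = A * (u x - m0)"
      unfolding A_def using integral_mult[OF integrable_on_const[OF LW], of "(u x - m0) * CK" 1]
      by (simp add: algebra_simps)
    finally show ?thesis .
  qed
  have Lzero: "\<forall>y\<in>W. u y = m0" if L0: "0 \<le> nonlocal_L K W u x" and ux: "u x = m0" for x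
  proof
    fix y assume y: "y \<in> W"
    define g where "g = (\<lambda>y. (u y - m0) * K (x - y))"
    have cg: "continuous_on W g" unfolding g_def by (intro continuous_intros cuW cKx)
    have gnn: "\<And>y. y \<in> W \<Longrightarrow> 0 \<le> g y"
      unfolding g_def using m0le K_pos by (simp add: less_imp_le)
    have ig: "g integrable_on W"
    proof (rule int_bounded_cont[OF oW bW cg, where C = "(B + \<bar>m0\<bar>) * CK"])
      fix y assume y: "y \<in> W"
      have "\<bar>u y - m0\<bar> \<le> B + \<bar>m0\<bar>" using B[of y] y WU by auto
      moreover have "\<bar>K (x - y)\<bar> \<le> CK" using K_bounds[of "x - y"] K_pos[of "x-y"] by simp
      ultimately show "\<bar>g y\<bar> \<le> (B + \<bar>m0\<bar>) * CK"
        unfolding g_def abs_mult by (intro mult_mono) auto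
    qed
    have "nonlocal_L K W u x = integral W (\<lambda>y. - g y)"
      unfolding nonlocal_L_def g_def ux by (simp add: algebra_simps)
    then have "integral W g \<le> 0" using L0 by simp
    then have "g y = 0" using int_zero_pos[OF oW cg gnn ig _ y] by blast
    then show "u y = m0" unfolding g_def using K_pos[of "x - y"] by simp
  qed
  obtain D where D0: "\<forall>x\<in>{a i..b i}. D 0 x = u x"
    and DS: "\<forall>n. \<forall>x\<in>{a i..b i}. (D n has_real_derivative D (Suc n) x) (at x within {a i..b i})"
    using u_smooth[OF i_lt] unfolding smooth_within_def by auto
  define p where "p = a i"
  define q where "q = b i"
  have pq: "p < q" using ab[OF i_lt] p_def q_def by simp
  note D0 = D0[folded p_def q_def] and DS = DS[folded p_def q_def]
  note sub = sub[folded p_def q_def]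
  have Du: "(u has_real_derivative D 1 y) (at y within {p..q})" if y: "y \<in> {p..q}" for y
  proof (rule has_field_derivative_transform_within[of "D 0" _ y _ 1])
    show "(D 0 has_real_derivative D 1 y) (at y within {p..q})" using DS y by auto
  qed (use y D0 in auto)
  have Di1: "(u has_real_derivative D 1 y) (at y)" if "p < y" "y < q" for y
    using Du[of y] that at_within_Icc_at[of p y q] by simp
  have Di2: "(D 1 has_real_derivative D 2 y) (at y)" if "p < y" "y < q" for y
    using DS that at_within_Icc_at[of p y q] by (metis Suc_1 atLeastAtMost_iff less_imp_le)
  have dd: "deriv (deriv u) y = D 2 y" if y: "p < y" "y < q" for y
  proof -
    have "(deriv u has_real_derivative D 2 y) (at y)"
    proof (rule has_field_derivative_transform_within_open[OF Di2[OF y], of "{p<..<q}"])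
      fix z assume "z \<in> {p<..<q}"
      then show "D 1 z = deriv u z" using Di1[of z] by (simp add: DERIV_imp_deriv)
    qed (use y in auto)
    then show ?thesis by (simp add: DERIV_imp_deriv)
  qed
  have cD1: "continuous_on {p..q} (D 1)" by (rule DERIV_continuous_on) (use DS in blast)
  have cu: "continuous_on {p..q} u" by (rule DERIV_continuous_on) (use Du in blast)
  have ineqW: "\<And>x. x \<in> W \<Longrightarrow> - deriv (deriv u) x + nonlocal_L K W u x + c x * u x \<ge> 0"
    using ineq unfolding W_def by blast
  have key: "D 2 y \<le> A * (u y - m0)" if y: "p < y" "y < q" and uy: "u y < 0" for y
  proof -
    have yW: "y \<in> W" using sub y by auto
    have "c y * u y \<le> 0" using c_nonneg[of y] yW uy unfolding W_def by (simp add: mult_nonneg_nonpos)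
    moreover have "nonlocal_L K W u y \<le> A * (u y - m0)" using Lbound m0le[OF yW] by blast
    ultimately show ?thesis using ineqW[OF yW] dd[OF y] by linarith
  qed
  have const: "\<forall>y\<in>W. u y = m0" if ab': "p \<le> \<alpha>" "\<alpha> < \<beta>" "\<beta> \<le> q" and uc: "\<And>z. \<alpha> < z \<Longrightarrow> z < \<beta> \<Longrightarrow> u z = m0" for \<alpha> \<beta>
  proof -
    have D1z: "D 1 z = 0" if z: "\<alpha> < z" "z < \<beta>" for z
    proof -
      have "(u has_real_derivative 0) (at z)"
        by (rule has_field_derivative_transform_within_open[OF DERIV_const[of m0 "at z"], of "{\<alpha><..<\<beta>}"])
           (use z uc in auto)
      then show ?thesis using DERIV_unique Di1[of z] z ab' by force
    qed
    define x where "x = (\<alpha> + \<beta>) / 2"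
    have x: "\<alpha> < x" "x < \<beta>" using ab' by (auto simp: x_def)
    have "(D 1 has_real_derivative 0) (at x)"
      by (rule has_field_derivative_transform_within_open[OF DERIV_const[of 0 "at x"], of "{\<alpha><..<\<beta>}"])
         (use x D1z in auto)
    then have D2x: "D 2 x = 0" using DERIV_unique Di2[of x] x ab' by force
    have xW: "x \<in> W" using sub x ab' by auto
    have ux: "u x = m0" using uc x by simp
    have "c x * u x \<le> 0" using c_nonneg[of x] xW m0neg ux unfolding W_def by (simp add: mult_nonneg_nonpos)
    then have "0 \<le> nonlocal_L K W u x" using ineqW[OF xW] dd[of x] x ab' D2x by simp
    then show ?thesis using Lzero ux by blast
  qed
  from x0_bdry show ?thesis
  proof
    assume x0p: "x0 = a i"
    then have x0p': "x0 = p" by (simp add: p_def)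
    have x0q: "x0 \<noteq> b i" using x0p ab[OF i_lt] by simp
    show ?thesis
    proof (cases "D 1 p = 0")
      case False
      have "0 \<le> D 1 p"
      proof -
        have "((\<lambda>y. (u y - u p) / (y - p)) \<longlongrightarrow> D 1 p) (at_right p)"
          using Du[of p] pq unfolding has_field_derivative_iff by (simp add: at_within_Icc_at_right)
        moreover have "eventually (\<lambda>y. 0 \<le> (u y - u p) / (y - p)) (at_right p)"
          unfolding eventually_at_right_field
        proof (intro exI[of _ q] conjI allI impI)
          fix y assume "p < y" "y < q"
          then have "u p \<le> u y" using m0le[of y] sub x0p' m0_def by auto
          then show "0 \<le> (u y - u p) / (y - p)" using \<open>p < y\<close> by simp
        qed (use pq in auto)
        ultimately show ?thesis by (rule tendsto_lowerbound) simp
      qed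
      then have "- D 1 p < 0" using False by simp
      then show ?thesis using Du[of p] pq x0p x0q unfolding p_def q_def by auto
    next
      case True
      have "(u \<longlongrightarrow> u p) (at_right p)"
        using cu pq unfolding continuous_on_def by (metis atLeastAtMost_iff at_within_Icc_at_right order.refl less_imp_le)
      then have "eventually (\<lambda>y. u y < 0) (at_right p)"
        using order_tendstoD(2) u_neg x0p' by blast
      then obtain b' where b': "b' > p" "\<And>y. p < y \<Longrightarrow> y < b' \<Longrightarrow> u y < 0"
        unfolding eventually_at_right_field by blast
      define r where "r = p + (min b' q - p) / 2"
      have r: "p < r" "r < q" "r < b'" using b' pq by (auto simp: r_def min_def field_simps)
      obtain \<delta> where \<delta>: "\<delta> > 0" "\<delta> \<le> r - p" and w0: "\<forall>x. p \<le> x \<and> x \<le> p + \<delta> \<longrightarrow> u x - m0 = 0"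
      proof -
        have "\<exists>\<delta>>0. \<delta> \<le> r - p \<and> (\<forall>x. p \<le> x \<and> x \<le> p + \<delta> \<longrightarrow> u x - m0 = 0)"
        proof (rule gron_left[of p r "\<lambda>x. u x - m0" "D 1" "D 2" A])
          show "continuous_on {p..r} (\<lambda>x. u x - m0)"
            by (intro continuous_intros continuous_on_subset[OF cu]) (use r in auto)
          show "continuous_on {p..r} (D 1)" by (rule continuous_on_subset[OF cD1]) (use r in auto)
          show "((\<lambda>x. u x - m0) has_real_derivative D 1 x) (at x)" if "p < x" "x < r" for x
            using DERIV_diff[OF Di1[of x] DERIV_const[of m0 "at x"]] that r by simp
          show "(D 1 has_real_derivative D 2 x) (at x)" if "p < x" "x < r" for x
            using Di2[of x] that r by simp
          show "0 \<le> u x - m0" if "p \<le> x" "x \<le> r" for x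
          proof (cases "x = p")
            case True then show ?thesis using x0p' m0_def by simp
          next
            case False then have "x \<in> W" using sub that r by force
            then show ?thesis using m0le[of x] by simp
          qed
          show "D 2 x \<le> A * (u x - m0)" if "p < x" "x < r" for x
            using key[of x] b'(2)[of x] that r by simp
        qed (use r True x0p' m0_def A0 in auto)
        then show ?thesis using that by blast
      qed
      have "\<forall>y\<in>W. u y = m0"
        by (rule const[of p "p + \<delta>"]) (use \<delta> r w0 in auto)
      then show ?thesis unfolding W_def by blast
    qed
  next
    assume x0q: "x0 = b i"
    then have x0q': "x0 = q" by (simp add: q_def)
    have x0p: "x0 \<noteq> a i" using x0q ab[OF i_lt] by simp
    show ?thesis
    proof (cases "D 1 q = 0")
      case False
      have "D 1 q \<le> 0"
      proof -
        have "((\<lambda>y. (u y - u q) / (y - q)) \<longlongrightarrow> D 1 q) (at_left q)"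
          using Du[of q] pq unfolding has_field_derivative_iff by (simp add: at_within_Icc_at_left)
        moreover have "eventually (\<lambda>y. 0 \<ge> (u y - u q) / (y - q)) (at_left q)"
          unfolding eventually_at_left_field
        proof (intro exI[of _ p] conjI allI impI)
          fix y assume "p < y" "y < q"
          then have "u q \<le> u y" using m0le[of y] sub x0q' m0_def by auto
          then show "0 \<ge> (u y - u q) / (y - q)" using \<open>y < q\<close> by (simp add: divide_nonneg_neg)
        qed (use pq in auto)
        ultimately show ?thesis by (rule tendsto_upperbound) simp
      qed
      then have "D 1 q < 0" using False by simp
      then show ?thesis using Du[of q] pq x0p x0q unfolding p_def q_def by auto
    next
      case True
      have "(u \<longlongrightarrow> u q) (at_left q)"
        using cu pq unfolding continuous_on_def by (metis atLeastAtMost_iff at_within_Icc_at_left order.refl less_imp_le)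
      then have "eventually (\<lambda>y. u y < 0) (at_left q)"
        using order_tendstoD(2) u_neg x0q' by blast
      then obtain b' where b': "b' < q" "\<And>y. b' < y \<Longrightarrow> y < q \<Longrightarrow> u y < 0"
        unfolding eventually_at_left_field by blast
      define r where "r = q - (q - max b' p) / 2"
      have r: "p < r" "r < q" "b' < r" using b' pq by (auto simp: r_def max_def field_simps)
      obtain \<delta> where \<delta>: "\<delta> > 0" "\<delta> \<le> q - r" and w0: "\<forall>x. q - \<delta> \<le> x \<and> x \<le> q \<longrightarrow> u x - m0 = 0"
      proof -
        have "\<exists>\<delta>>0. \<delta> \<le> q - r \<and> (\<forall>x. q - \<delta> \<le> x \<and> x \<le> q \<longrightarrow> u x - m0 = 0)"
        proof (rule gron_right[of r q "\<lambda>x. u x - m0" "D 1" "D 2" A])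
          show "continuous_on {r..q} (\<lambda>x. u x - m0)"
            by (intro continuous_intros continuous_on_subset[OF cu]) (use r in auto)
          show "continuous_on {r..q} (D 1)" by (rule continuous_on_subset[OF cD1]) (use r in auto)
          show "((\<lambda>x. u x - m0) has_real_derivative D 1 x) (at x)" if "r < x" "x < q" for x
            using DERIV_diff[OF Di1[of x] DERIV_const[of m0 "at x"]] that r by simp
          show "(D 1 has_real_derivative D 2 x) (at x)" if "r < x" "x < q" for x
            using Di2[of x] that r by simp
          show "0 \<le> u x - m0" if "r \<le> x" "x \<le> q" for x
          proof (cases "x = q")
            case True then show ?thesis using x0q' m0_def by simp
          next
            case False then have "x \<in> W" using sub that r by force
            then show ?thesis using m0le[of x] by simp
          qed
          show "D 2 x \<le> A * (u x - m0)" if "r < x" "x < q" for x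
            using key[of x] b'(2)[of x] that r by simp
        qed (use r True x0q' m0_def A0 in auto)
        then show ?thesis using that by blast
      qed
      have "\<forall>y\<in>W. u y = m0"
        by (rule const[of "q - \<delta>" q]) (use \<delta> r w0 in auto)
      then show ?thesis unfolding W_def by blast
    qed
  qed
qed

end
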